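(* Let $p\ge1$, $m\in\mathbb{N}$, $a,b>0$, $\beta\in\mathbb{R}^p$, let $A$ be a real $p\times s$ matrix with $\operatorname{rank}(A)=s\le p$, and let $\xi$ be a design on $\mathcal{X}$. Then $A^T\beta$ is identifiable for $\xi$ in the Poisson–Gamma model (i.e. $A=M(\xi;\beta)H$ for some $H\in\mathbb{R}^{p\times s}$) if and only if $A^T\beta$ is identifiable for $\xi$ in the Poisson model (i.e. $A=M_{Po}(\xi;\beta)H'$ for some $H'\in\mathbb{R}^{p\times s}$).
   Context: Let $\mathcal{X}\subseteq\mathbb{R}^k$ be a design region and $f=(1,f_1,\ldots,f_{p-1})^T:\mathcal{X}\to\mathbb{R}^p$ a vector of regression functions whose first component is the constant 1. A design $\xi$ is a probability measure on $\mathcal{X}$ with finite support $x_1,\ldots,x_l$ and weights $w_1,\ldots,w_l\ge0$, $\sum_j w_j=1$. The Poisson information matrix is $M_{Po}(\xi;\beta)=\sum_{j=1}^l w_j\exp(f(x_j)^T\beta)f(x_j)f(x_j)^T$, and the Poisson–Gamma information matrix is $M(\xi;\beta)=\frac{a}{b}\Bigl(M_{Po}(\xi;\beta)-\frac{M_{Po}(\xi;\beta)e_1e_1^TM_{Po}(\xi;\beta)}{e_1^TM_{Po}(\xi;\beta)e_1+b/m}\Bigr)$, where $e_1$ is the first standard unit vector of $\mathbb{R}^p$. *)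

theory Defs
  imports "HOL-Analysis.Analysis"
begin

definition outer :: "real^'p \<Rightarrow> real^'p \<Rightarrow> real^'p^'p" where
  "outer u v = (\<chi> i j. u $ i * v $ j)"

definition is_design :: "'x set \<Rightarrow> 'x set \<Rightarrow> ('x \<Rightarrow> real) \<Rightarrow> bool" where
  "is_design X S w \<longleftrightarrow> finite S \<and> S \<noteq> {} \<and> S \<subseteq> X \<and> (\<forall>x\<in>S. w x \<ge> 0) \<and> (\<Sum>x\<in>S. w x) = 1"

definition M_Po :: "('x \<Rightarrow> real^'p) \<Rightarrow> 'x set \<Rightarrow> ('x \<Rightarrow> real) \<Rightarrow> real^'p \<Rightarrow> real^'p^'p" where
  "M_Po f S w \<beta> = (\<Sum>x\<in>S. (w x * exp (f x \<bullet> \<beta>)) *\<^sub>R outer (f x) (f x))"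

text \<open>Poisson-Gamma information matrix M(xi; beta); e1 = axis i0 1 is the unit
  vector of the constant regression function.\<close>
definition M_PG :: "real \<Rightarrow> real \<Rightarrow> nat \<Rightarrow> 'p \<Rightarrow> ('x \<Rightarrow> real^'p) \<Rightarrow> 'x set \<Rightarrow> ('x \<Rightarrow> real)
    \<Rightarrow> real^'p \<Rightarrow> real^'p^'p" where
  "M_PG a b m i0 f S w \<beta> =
    (let Mp = M_Po f S w \<beta>; e = axis i0 (1::real) in
     (a / b) *\<^sub>R (Mp - (1 / (e \<bullet> (Mp *v e) + b / real m)) *\<^sub>R (Mp ** outer e e ** Mp)))"

end

theory Submission
  imports Defs
begin

lemma mm_sub_ldistrib: "(A::real^'n^'m) ** (B - C) = A ** B - A ** C"
  by (simp add: matrix_matrix_mult_def vec_eq_iff algebra_simps sum_subtractf)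

lemma mm_sub_rdistrib: "((B::real^'n^'m) - C) ** A = B ** A - C ** A"
  by (simp add: matrix_matrix_mult_def vec_eq_iff algebra_simps sum_subtractf)

lemma mm_add_rdistrib: "((B::real^'n^'m) + C) ** A = B ** A + C ** A"
  by (simp add: matrix_matrix_mult_def vec_eq_iff algebra_simps sum.distrib)

lemma mm_scaleR_right: "(A::real^'n^'m) ** (k *\<^sub>R B) = k *\<^sub>R (A ** B)"
  by (simp add: matrix_matrix_mult_def vec_eq_iff sum_distrib_left algebra_simps)

lemma mm_scaleR_left: "(k *\<^sub>R (A::real^'n^'m)) ** B = k *\<^sub>R (A ** B)"
  by (simp add: matrix_matrix_mult_def vec_eq_iff sum_distrib_left algebra_simps)

lemma outer_sandwich:
  fixes u v x y :: "real^'p" and B :: "real^'p^'p"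
  shows "outer u v ** B ** outer x y = (v \<bullet> (B *v x)) *\<^sub>R outer u y"
proof -
  have "(outer u v ** B ** outer x y) $ i $ j = ((v \<bullet> (B *v x)) *\<^sub>R outer u y) $ i $ j" for i j
  proof -
    have "(outer u v ** B ** outer x y) $ i $ j
        = (\<Sum>l\<in>UNIV. (\<Sum>k\<in>UNIV. u $ i * v $ k * B $ k $ l) * (x $ l * y $ j))"
      by (simp add: matrix_matrix_mult_def outer_def)
    also have "\<dots> = (\<Sum>l\<in>UNIV. \<Sum>k\<in>UNIV. (u $ i * y $ j) * (v $ k * B $ k $ l * x $ l))"
      by (intro sum.cong refl) (simp add: sum_distrib_right sum_distrib_left mult_ac)
    also have "\<dots> = u $ i * y $ j * (\<Sum>l\<in>UNIV. \<Sum>k\<in>UNIV. v $ k * B $ k $ l * x $ l)"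
      by (simp add: sum_distrib_left)
    also have "(\<Sum>l\<in>UNIV. \<Sum>k\<in>UNIV. v $ k * B $ k $ l * x $ l) = (\<Sum>k\<in>UNIV. \<Sum>l\<in>UNIV. v $ k * (B $ k $ l * x $ l))"
      by (subst sum.swap) (simp add: mult_ac)
    also have "\<dots> = v \<bullet> (B *v x)"
      by (simp add: inner_vec_def matrix_vector_mult_def sum_distrib_left)
    finally show ?thesis by (simp add: outer_def)
  qed
  then show ?thesis by (simp add: vec_eq_iff)
qed

theorem theorem3:
  fixes X :: "(real^'k) set" and f :: "real^'k \<Rightarrow> real^'p" and i0 :: 'p
    and S :: "(real^'k) set" and w :: "real^'k \<Rightarrow> real"
    and \<beta> :: "real^'p" and A :: "real^'s^'p" and a b :: real and m :: nat
  assumes "\<forall>x\<in>X. f x $ i0 = 1"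
    and "m \<ge> 1" and "a > 0" and "b > 0"
    and "rank A = CARD('s)"
    and "is_design X S w"
  shows "(\<exists>H :: real^'s^'p. A = M_PG a b m i0 f S w \<beta> ** H)
     \<longleftrightarrow> (\<exists>H' :: real^'s^'p. A = M_Po f S w \<beta> ** H')"
proof -
  define P where "P = M_Po f S w \<beta>"
  define e where "e = axis i0 (1::real)"
  define E where "E = outer e e"
  define d where "d = e \<bullet> (P *v e)"
  define r where "r = b / real m"
  define c where "c = d + r"
  define s where "s = a / b"
  have r0: "r \<noteq> 0" using assms(2,4) by (simp add: r_def)
  have s0: "s \<noteq> 0" using assms(3,4) by (simp add: s_def)
  have M: "M_PG a b m i0 f S w \<beta> = s *\<^sub>R (P - (1/c) *\<^sub>R (P ** E ** P))"
    by (simp add: M_PG_def P_def e_def E_def d_def r_def c_def s_def Let_def)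
  have EPE: "E ** P ** E = d *\<^sub>R E"
    unfolding E_def d_def by (rule outer_sandwich)
  have fw: "M_PG a b m i0 f S w \<beta> = P ** (s *\<^sub>R (mat 1 - (1/c) *\<^sub>R (E ** P)))"
    unfolding M by (simp add: mm_scaleR_right mm_sub_ldistrib matrix_mul_rid matrix_mul_assoc)
  obtain G where bw: "P = M_PG a b m i0 f S w \<beta> ** G"
  proof (cases "c = 0")
    case True
    show ?thesis
      by (rule that[of "(1/s) *\<^sub>R mat 1"]) (simp add: M True mm_scaleR_left mm_scaleR_right matrix_mul_rid s0)
  next
    case False
    have "M_PG a b m i0 f S w \<beta> ** ((1/s) *\<^sub>R (mat 1 + (1/r) *\<^sub>R (E ** P)))
        = P + ((1/r) - 1/c - (1/c) * (1/r) * d) *\<^sub>R (P ** E ** P)"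
    proof -
      have "P ** E ** P ** (E ** P) = d *\<^sub>R (P ** E ** P)"
        by (metis EPE matrix_mul_assoc mm_scaleR_left mm_scaleR_right)
      then show ?thesis
        unfolding M using s0
        by (simp add: mm_scaleR_left mm_scaleR_right mm_sub_rdistrib matrix_add_ldistrib
            matrix_mul_rid matrix_mul_assoc algebra_simps)
    qed
    also have "(1/r) - 1/c - (1/c) * (1/r) * d = 0"
      using False r0 unfolding c_def by (simp add: field_simps)
    finally show ?thesis by (intro that[of "(1/s) *\<^sub>R (mat 1 + (1/r) *\<^sub>R (E ** P))"]) simp
  qed
  show ?thesis
  proof
    assume "\<exists>H. A = M_PG a b m i0 f S w \<beta> ** H"
    then obtain H where "A = M_PG a b m i0 f S w \<beta> ** H" by blast
    then have "A = M_Po f S w \<beta> ** ((s *\<^sub>R (mat 1 - (1/c) *\<^sub>R (E ** P))) ** H)"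
      by (simp add: fw P_def matrix_mul_assoc)
    then show "\<exists>H'. A = M_Po f S w \<beta> ** H'" by blast
  next
    assume "\<exists>H'. A = M_Po f S w \<beta> ** H'"
    then obtain H where "A = P ** H" by (auto simp: P_def)
    then have "A = M_PG a b m i0 f S w \<beta> ** (G ** H)"
      by (simp add: bw matrix_mul_assoc)
    then show "\<exists>H. A = M_PG a b m i0 f S w \<beta> ** H" by blast
  qed
qed

end
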